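(* Let $A\in C([0,T),\mathbb R^{d\times d})$, let $\Phi(t,\tau)$, $t,\tau\in[0,T)$, be the solution operator of $\dot u(t)=A(t)u(t)$, and for $V_0\in\mathcal G(s,d)$ set $V(t)=\Phi(t,0)V_0$. Then for every $\tau\in[0,T)$ $$\frac{d}{dt}\angle(V(\tau),V(t))\Big|_{t=\tau+}=\big\|(I_d-P_{V(\tau)})A(\tau)P_{V(\tau)}\big\|,$$ where $\|\cdot\|$ is the spectral norm on $\mathbb R^{d\times d}$ and $P_{V(\tau)}$ is the orthogonal projection onto $V(\tau)$ (the right derivative exists).
   Context: $\mathcal G(s,d)$ is the Grassmannian of $s$-dimensional subspaces of $\mathbb R^d$. For $V,W\in\mathcal G(s,d)$ choose $P,Q\in\mathbb R^{d\times s}$ with orthonormal columns spanning $V$ and $W$; the principal angles $0\le\phi_1\le\dots\le\phi_s\le\pi/2$ are defined by $\cos\phi_j=\sigma_j$ where $\sigma_1\ge\dots\ge\sigma_s\ge0$ are the singular values of $P^\top Q$, and $\angle(V,W):=\phi_s$. The solution operator satisfies $\partial_t\Phi(t,\tau)=A(t)\Phi(t,\tau)$, $\Phi(\tau,\tau)=I_d$. *)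

theory Defs
  imports "HOL-Analysis.Analysis" "HOL-Library.Extended_Real"
begin

text \<open>Time domain [0,T) with T possibly infinite.\<close>
definition time_dom :: "ereal \<Rightarrow> real set" where
  "time_dom T = {t. 0 \<le> t \<and> ereal t < T}"

text \<open>Grassmannian G(s,d) of s-dimensional linear subspaces of R^d.\<close>
definition grassmannian :: "nat \<Rightarrow> (real^'n) set set" where
  "grassmannian s = {V. subspace V \<and> dim V = s}"

text \<open>p_0,...,p_{s-1} are orthonormal and span V (the columns of P).\<close>
definition is_onb :: "(real^'n) set \<Rightarrow> nat \<Rightarrow> (nat \<Rightarrow> real^'n) \<Rightarrow> bool" where
  "is_onb V s p \<longleftrightarrow> (\<forall>i<s. \<forall>j<s. p i \<bullet> p j = (if i = j then 1 else 0))
                    \<and> span (p ` {..<s}) = V"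

text \<open>Eigenvalue of an s x s matrix given as nat-indexed entries.\<close>
definition is_eigenvalue_sq :: "nat \<Rightarrow> (nat \<Rightarrow> nat \<Rightarrow> real) \<Rightarrow> real \<Rightarrow> bool" where
  "is_eigenvalue_sq s B c \<longleftrightarrow>
     (\<exists>x::nat \<Rightarrow> real. (\<exists>i<s. x i \<noteq> 0) \<and> (\<forall>i<s. (\<Sum>j<s. B i j * x j) = c * x i))"

text \<open>Smallest singular value sigma_s of an s x s matrix M: square root of the
  smallest eigenvalue of M^T M.\<close>
definition min_singular_value :: "nat \<Rightarrow> (nat \<Rightarrow> nat \<Rightarrow> real) \<Rightarrow> real" where
  "min_singular_value s M =
     sqrt (Min {c. is_eigenvalue_sq s (\<lambda>i j. \<Sum>k<s. M k i * M k j) c})"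

text \<open>Largest principal angle phi_s between V and W (s = dim V):
  cos phi_s = sigma_s(P^T Q) for orthonormal bases P of V and Q of W.\<close>
definition subspace_angle :: "(real^'n) set \<Rightarrow> (real^'n) set \<Rightarrow> real" where
  "subspace_angle V W =
     (let s = dim V;
          p = (SOME p. is_onb V s p);
          q = (SOME q. is_onb W s q)
      in arccos (min_singular_value s (\<lambda>i j. p i \<bullet> q j)))"

text \<open>Orthogonal projection onto a subspace, and its matrix.\<close>
definition orth_proj :: "(real^'n) set \<Rightarrow> real^'n \<Rightarrow> real^'n" where
  "orth_proj V x = (THE y. y \<in> V \<and> (\<forall>w\<in>V. (x - y) \<bullet> w = 0))"

definition proj_matrix :: "(real^'n) set \<Rightarrow> real^'n^'n" where
  "proj_matrix V = matrix (orth_proj V)"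

text \<open>Spectral norm (operator norm induced by the Euclidean norm).\<close>
definition spectral_norm :: "real^'n^'n \<Rightarrow> real" where
  "spectral_norm M = onorm (\<lambda>x. M *v x)"

end

theory Submission
  imports Defs
begin


lemma matvec_norm_le:
  fixes A :: "real^'n^'m"
  shows "norm (A *v x) \<le> (real CARD('m) * real CARD('n) * norm A) * norm x"
proof -
  have "onorm ((*v) A) \<le> real CARD('m) * real CARD('n) * norm A"
  proof (rule onorm_le_matrix_component)
    fix i j
    have "\<bar>A$i$j\<bar> \<le> norm (A$i)" by (rule component_le_norm_cart)
    also have "\<dots> \<le> norm A" by (rule Finite_Cartesian_Product.norm_nth_le)
    finally show "\<bar>A$i$j\<bar> \<le> norm A" .
  qed
  moreover have "norm (A *v x) \<le> onorm ((*v) A) * norm x"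
    by (rule onorm) simp
  ultimately show ?thesis by (meson mult_right_mono norm_ge_zero order_trans)
qed

lemma linear_mat_app: "linear (\<lambda>X::real^'n^'m. X *v x)"
  by (rule linearI) (simp_all add: matrix_vector_mult_add_rdistrib matrix_vector_mult_def vec_eq_iff sum_distrib_left sum.distrib algebra_simps)

lemma bl_mat_app: "bounded_linear (\<lambda>X::real^'n^'m. X *v x)"
  using linear_mat_app linear_conv_bounded_linear by blast

lemma time_dom_interval:
  assumes "t \<in> time_dom T" "0 \<le> r" "r \<le> t" shows "r \<in> time_dom T"
  using assms unfolding time_dom_def by (auto intro: le_less_trans[of "ereal r" "ereal t"])

lemma time_dom_interior:
  assumes "t \<in> time_dom T" "0 < r" "r < t" shows "at r within time_dom T = at r"
proof (rule at_within_open_subset[of _ "{0<..<t}"])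
  show "{0<..<t} \<subseteq> time_dom T" using assms time_dom_interval[OF assms(1)] by auto
qed (use assms in auto)

lemma ode_inj:
  fixes A :: "real \<Rightarrow> real^'n^'n" and \<Phi> :: "real \<Rightarrow> real \<Rightarrow> real^'n^'n"
  assumes A_cont: "continuous_on (time_dom T) A"
    and \<Phi>_ode: "\<forall>\<sigma>\<in>time_dom T. \<forall>t\<in>time_dom T.
                 ((\<lambda>t. \<Phi> t \<sigma>) has_vector_derivative (A t ** \<Phi> t \<sigma>)) (at t within time_dom T)"
    and \<Phi>_init: "\<forall>\<sigma>\<in>time_dom T. \<Phi> \<sigma> \<sigma> = mat 1"
    and t: "t \<in> time_dom T" and x: "\<Phi> t 0 *v x = 0"
  shows "x = 0"
proof -
  have t0: "0 \<le> t" using t by (simp add: time_dom_def)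
  have z: "0 \<in> time_dom T" using time_dom_interval[OF t] t0 by simp
  have sub: "{0..t} \<subseteq> time_dom T" using time_dom_interval[OF t] by auto
  have "compact (A ` {0..t})"
    by (rule compact_continuous_image) (use A_cont sub continuous_on_subset in auto)
  then obtain M0 where M0: "\<And>r. r \<in> {0..t} \<Longrightarrow> norm (A r) \<le> M0"
    using compact_imp_bounded bounded_iff by (metis image_eqI)
  define K where "K = real CARD('n) * real CARD('n) * max M0 0"
  have K0: "K \<ge> 0" by (simp add: K_def)
  have KA: "norm (A r *v y) \<le> K * norm y" if "r \<in> {0..t}" for r y
  proof -
    have "norm (A r *v y) \<le> (real CARD('n) * real CARD('n) * norm (A r)) * norm y"
      by (rule matvec_norm_le)
    also have "\<dots> \<le> K * norm y"
      unfolding K_def using M0[OF that]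
      by (intro mult_right_mono mult_left_mono) auto
    finally show ?thesis .
  qed
  define u where "u r = \<Phi> r 0 *v x" for r
  have ud: "(u has_vector_derivative (A r *v u r)) (at r within time_dom T)" if "r \<in> time_dom T" for r
  proof -
    have "((\<lambda>r. \<Phi> r 0) has_vector_derivative (A r ** \<Phi> r 0)) (at r within time_dom T)"
      using \<Phi>_ode z that by blast
    then have "((\<lambda>r. \<Phi> r 0 *v x) has_vector_derivative ((A r ** \<Phi> r 0) *v x)) (at r within time_dom T)"
      using bounded_linear.has_vector_derivative[OF bl_mat_app] by blast
    moreover have "u = (\<lambda>r. \<Phi> r 0 *v x)" by (simp add: u_def fun_eq_iff)
    ultimately show ?thesis by (simp add: u_def matrix_vector_mul_assoc[symmetric])
  qed
  define g where "g r = (u r \<bullet> u r) * exp (2 * K * r)" for r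
  have gd: "(g has_real_derivative (2 * (u r \<bullet> (A r *v u r)) * exp (2*K*r) + (u r \<bullet> u r) * (exp (2*K*r) * (2*K)))) (at r within time_dom T)"
    if "r \<in> time_dom T" for r
  proof -
    have "((\<lambda>r. u r \<bullet> u r) has_derivative (\<lambda>h. u r \<bullet> (h *\<^sub>R (A r *v u r)) + (h *\<^sub>R (A r *v u r)) \<bullet> u r)) (at r within time_dom T)"
      by (rule has_derivative_inner) (use ud[OF that, unfolded has_vector_derivative_def] in auto)
    moreover have "(\<lambda>h. u r \<bullet> (h *\<^sub>R (A r *v u r)) + (h *\<^sub>R (A r *v u r)) \<bullet> u r) = (*) (2 * (u r \<bullet> (A r *v u r)))"
      by (auto simp: fun_eq_iff inner_commute)
    ultimately have h: "((\<lambda>r. u r \<bullet> u r) has_real_derivative 2 * (u r \<bullet> (A r *v u r))) (at r within time_dom T)"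
      by (simp add: has_field_derivative_def)
    have e: "((\<lambda>r. exp (2*K*r)) has_real_derivative exp (2*K*r) * (2*K)) (at r within time_dom T)"
      by (intro derivative_eq_intros) auto
    show ?thesis unfolding g_def
      by (rule DERIV_cong[OF DERIV_mult[OF h e]]) (simp add: algebra_simps)
  qed
  have "g 0 \<le> g t"
  proof (rule DERIV_nonneg_imp_increasing_open[OF t0])
    fix r assume r: "0 < r" "r < t"
    have rd: "r \<in> time_dom T" using time_dom_interval[OF t] r by auto
    have "\<bar>u r \<bullet> (A r *v u r)\<bar> \<le> norm (u r) * norm (A r *v u r)" by (rule Cauchy_Schwarz_ineq2)
    also have "\<dots> \<le> norm (u r) * (K * norm (u r))" using KA[of r "u r"] r by (intro mult_left_mono) auto
    finally have "u r \<bullet> (A r *v u r) \<ge> - K * (u r \<bullet> u r)"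
      by (simp add: power2_norm_eq_inner[symmetric] power2_eq_square algebra_simps)
    then have "0 \<le> 2 * (u r \<bullet> (A r *v u r)) * exp (2*K*r) + (u r \<bullet> u r) * (exp (2*K*r) * (2*K))"
    proof -
      have "0 \<le> exp (2*K*r) * (2 * (u r \<bullet> (A r *v u r)) + 2*K*(u r \<bullet> u r))"
        using \<open>u r \<bullet> (A r *v u r) \<ge> - K * (u r \<bullet> u r)\<close> by (intro mult_nonneg_nonneg) auto
      then show ?thesis by (simp add: algebra_simps)
    qed
    then show "\<exists>y. DERIV g r :> y \<and> 0 \<le> y"
      using gd[OF rd] time_dom_interior[OF t r] by auto
  next
    show "continuous_on {0..t} g"
    proof -
      have "continuous_on (time_dom T) g" unfolding continuous_on_eq_continuous_within
        using gd DERIV_continuous by blast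
      then show ?thesis by (rule continuous_on_subset[OF _ sub])
    qed
  qed
  then have "x \<bullet> x \<le> 0" using \<Phi>_init z x by (simp add: g_def u_def)
  then show "x = 0" by (meson antisym inner_ge_zero inner_eq_zero_iff)
qed




lemma orth_proj_ex:
  fixes V :: "(real^'n) set" assumes "subspace V"
  shows "\<exists>y. y \<in> V \<and> (\<forall>w\<in>V. (x - y) \<bullet> w = 0)"
proof -
  obtain y z where "y \<in> span V" "\<And>w. w \<in> span V \<Longrightarrow> orthogonal z w" "x = y + z"
    using orthogonal_subspace_decomp_exists[of V x] by blast
  moreover have "span V = V" using assms by (simp add: span_eq_iff)
  ultimately show ?thesis by (intro exI[of _ y]) (auto simp: orthogonal_def)
qed

lemma orth_proj_eq:
  fixes V :: "(real^'n) set" assumes V: "subspace V" and y: "y \<in> V" "\<forall>w\<in>V. (x - y) \<bullet> w = 0"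
  shows "orth_proj V x = y"
  unfolding orth_proj_def
proof (rule the_equality)
  fix y' assume y': "y' \<in> V \<and> (\<forall>w\<in>V. (x - y') \<bullet> w = 0)"
  have d: "y' - y \<in> V" using y y' V by (simp add: subspace_diff)
  have "(y' - y) \<bullet> (y' - y) = (x - y) \<bullet> (y' - y) - (x - y') \<bullet> (y' - y)"
    by (simp add: algebra_simps)
  also have "\<dots> = 0" using y y' d by simp
  finally show "y' = y" by simp
qed (use y in auto)

lemma orth_proj_in: "subspace V \<Longrightarrow> orth_proj V x \<in> V"
  and orth_proj_orth: "subspace V \<Longrightarrow> w \<in> V \<Longrightarrow> (x - orth_proj V x) \<bullet> w = 0"
  for V :: "(real^'n) set"
proof -
  assume V: "subspace V"
  obtain y where y: "y \<in> V" "\<forall>w\<in>V. (x - y) \<bullet> w = 0" using orth_proj_ex[OF V] by blast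
  have e: "orth_proj V x = y" by (rule orth_proj_eq[OF V y])
  show "orth_proj V x \<in> V" using e y by simp
  assume "w \<in> V" then show "(x - orth_proj V x) \<bullet> w = 0" using e y by simp
qed

lemma orth_proj_id: "subspace V \<Longrightarrow> v \<in> V \<Longrightarrow> orth_proj V v = v"
  for V :: "(real^'n) set"
  by (rule orth_proj_eq) auto

lemma orth_proj_linear: "subspace V \<Longrightarrow> linear (orth_proj V)"
  for V :: "(real^'n) set"
proof (rule linearI)
  assume V: "subspace V"
  fix x y :: "real^'n" and c :: real
  show "orth_proj V (x + y) = orth_proj V x + orth_proj V y"
  proof (rule orth_proj_eq[OF V])
    show "orth_proj V x + orth_proj V y \<in> V" by (rule subspace_add[OF V orth_proj_in[OF V] orth_proj_in[OF V]])
    show "\<forall>w\<in>V. (x + y - (orth_proj V x + orth_proj V y)) \<bullet> w = 0"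
    proof
      fix w assume w: "w \<in> V"
      have "(x + y - (orth_proj V x + orth_proj V y)) \<bullet> w = (x - orth_proj V x) \<bullet> w + (y - orth_proj V y) \<bullet> w"
        by (simp add: algebra_simps inner_diff_left inner_add_left)
      then show "(x + y - (orth_proj V x + orth_proj V y)) \<bullet> w = 0" using orth_proj_orth[OF V w] by simp
    qed
  qed
  show "orth_proj V (c *\<^sub>R x) = c *\<^sub>R orth_proj V x"
  proof (rule orth_proj_eq[OF V])
    show "c *\<^sub>R orth_proj V x \<in> V" using V orth_proj_in subspace_scale by blast
    show "\<forall>w\<in>V. (c *\<^sub>R x - c *\<^sub>R orth_proj V x) \<bullet> w = 0"
      using orth_proj_orth[OF V] by (auto simp add: scaleR_diff_right[symmetric] del: scaleR_diff_right)
  qed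
qed

lemma orth_proj_bl: "subspace V \<Longrightarrow> bounded_linear (orth_proj V)"
  for V :: "(real^'n) set"
  using orth_proj_linear linear_conv_bounded_linear by blast

lemma orth_proj_inner: "subspace V \<Longrightarrow> orth_proj V x \<bullet> y = orth_proj V x \<bullet> orth_proj V y"
  for V :: "(real^'n) set"
proof -
  assume V: "subspace V"
  have "(y - orth_proj V y) \<bullet> orth_proj V x = 0" by (rule orth_proj_orth[OF V orth_proj_in[OF V]])
  then have "orth_proj V x \<bullet> (y - orth_proj V y) = 0" by (simp only: inner_commute)
  then have "orth_proj V x \<bullet> y - orth_proj V x \<bullet> orth_proj V y = 0" by (simp only: inner_diff_right)
  then show ?thesis by linarith
qed

lemma orth_proj_pyth: "subspace V \<Longrightarrow> (norm x)^2 = (norm (orth_proj V x))^2 + (norm (x - orth_proj V x))^2"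
  for V :: "(real^'n) set"
proof -
  assume V: "subspace V"
  have o: "(x - orth_proj V x) \<bullet> orth_proj V x = 0" using orth_proj_orth[OF V orth_proj_in[OF V]] .
  have "x = orth_proj V x + (x - orth_proj V x)" by simp
  then have "(norm x)^2 = (norm (orth_proj V x + (x - orth_proj V x)))^2" by simp
  also have "\<dots> = (norm (orth_proj V x))^2 + (norm (x - orth_proj V x))^2"
    by (rule norm_add_Pythagorean) (use o in \<open>simp add: orthogonal_def inner_commute\<close>)
  finally show ?thesis .
qed

lemma onb_exists:
  fixes V :: "(real^'n) set"
  assumes "subspace V" "dim V = s" shows "\<exists>p. is_onb V s p"
proof -
  obtain B where B: "B \<subseteq> V" "pairwise orthogonal B" "\<And>x. x \<in> B \<Longrightarrow> norm x = 1"
     "independent B" "card B = dim V" "span B = V"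
    using orthonormal_basis_subspace[OF assms(1)] by blast
  have fin: "finite B" using B(4) independent_bound by blast
  obtain h where h: "bij_betw h {0..<card B} B" using ex_bij_betw_nat_finite[OF fin] by blast
  have "is_onb V s h" unfolding is_onb_def
  proof (intro conjI allI impI)
    fix i j assume ij: "i < s" "j < s"
    then have hi: "h i \<in> B" "h j \<in> B" using h assms(2) B(5) by (auto simp: bij_betw_def)
    show "h i \<bullet> h j = (if i = j then 1 else 0)"
    proof (cases "i = j")
      case True then show ?thesis using B(3)[OF hi(1)] by (simp add: norm_eq_1)
    next
      case False
      then have "h i \<noteq> h j" using h ij assms(2) B(5) by (auto simp: bij_betw_def inj_on_def)
      then show ?thesis using B(2) hi False by (auto simp: pairwise_def orthogonal_def)
    qed
  next
    have "h ` {..<s} = B" using h assms(2) B(5) by (auto simp: bij_betw_def lessThan_atLeast0)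
    then show "span (h ` {..<s}) = V" using B(6) by simp
  qed
  then show ?thesis by blast
qed

context
  fixes V :: "(real^'n) set" and s :: nat and p :: "nat \<Rightarrow> real^'n"
  assumes onb: "is_onb V s p"
begin

lemma onb_orth: "i < s \<Longrightarrow> j < s \<Longrightarrow> p i \<bullet> p j = (if i = j then 1 else 0)"
  using onb by (simp add: is_onb_def)

lemma onb_span: "span (p ` {..<s}) = V" using onb by (simp add: is_onb_def)

lemma onb_subspace: "subspace V" using subspace_span[of "p ` {..<s}"] unfolding onb_span .

lemma onb_in: "i < s \<Longrightarrow> p i \<in> V"
proof -
  assume "i < s"
  then have "p i \<in> span (p ` {..<s})" by (intro span_base) auto
  then show ?thesis unfolding onb_span .
qed

lemma onb_coord: "i < s \<Longrightarrow> p i \<bullet> (\<Sum>j<s. x j *\<^sub>R p j) = x i"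
proof -
  assume i: "i < s"
  have "p i \<bullet> (\<Sum>j<s. x j *\<^sub>R p j) = (\<Sum>j<s. x j * (p i \<bullet> p j))"
    by (simp add: inner_sum_right)
  also have "\<dots> = (\<Sum>j<s. if j = i then x i else 0)"
    by (rule sum.cong) (use onb_orth i in auto)
  also have "\<dots> = x i" using i by simp
  finally show ?thesis .
qed

lemma onb_proj: "orth_proj V x = (\<Sum>k<s. (p k \<bullet> x) *\<^sub>R p k)"
proof (rule orth_proj_eq[OF onb_subspace])
  show "(\<Sum>k<s. (p k \<bullet> x) *\<^sub>R p k) \<in> V"
    using onb_subspace onb_in by (intro subspace_sum subspace_scale) auto
  define Y where "Y = (\<Sum>k<s. (p k \<bullet> x) *\<^sub>R p k)"
  have o: "(x - Y) \<bullet> w = 0" if "w \<in> span (p ` {..<s})" for w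
  proof (rule span_induct[OF that, of "\<lambda>w. (x - Y) \<bullet> w = 0"])
    show "subspace {w. (x - Y) \<bullet> w = 0}" unfolding subspace_def by (simp add: inner_add_right)
  next
    fix w assume "w \<in> p ` {..<s}"
    then obtain j where j: "j < s" "w = p j" by auto
    then show "(x - Y) \<bullet> w = 0" using onb_coord[OF j(1), of "\<lambda>k. p k \<bullet> x"]
      by (simp add: Y_def inner_diff_left inner_diff_right inner_commute)
  qed
  then show "\<forall>w\<in>V. (x - (\<Sum>k<s. (p k \<bullet> x) *\<^sub>R p k)) \<bullet> w = 0" using onb_span by (simp add: Y_def)
qed

lemma onb_expand: "v \<in> V \<Longrightarrow> v = (\<Sum>k<s. (p k \<bullet> v) *\<^sub>R p k)"
  using onb_proj orth_proj_id[OF onb_subspace] by metis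

lemma onb_parseval: "v \<in> V \<Longrightarrow> v \<bullet> y = (\<Sum>k<s. (p k \<bullet> v) * (p k \<bullet> y))"
proof -
  assume v: "v \<in> V"
  have "v \<bullet> y = (\<Sum>k<s. (p k \<bullet> v) *\<^sub>R p k) \<bullet> y" using onb_expand[OF v] by simp
  also have "\<dots> = (\<Sum>k<s. (p k \<bullet> v) * (p k \<bullet> y))" by (simp add: inner_sum_left)
  finally show ?thesis .
qed

lemma onb_comb_in: "(\<Sum>j<s. x j *\<^sub>R p j) \<in> V"
  using onb_subspace onb_in by (intro subspace_sum subspace_scale) auto

lemma onb_norm2: "(norm (\<Sum>j<s. x j *\<^sub>R p j))^2 = (\<Sum>j<s. (x j)^2)"
proof -
  have "(norm (\<Sum>j<s. x j *\<^sub>R p j))^2 = (\<Sum>j<s. x j *\<^sub>R p j) \<bullet> (\<Sum>j<s. x j *\<^sub>R p j)"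
    by (simp only: power2_norm_eq_inner)
  also have "\<dots> = (\<Sum>j<s. x j * (p j \<bullet> (\<Sum>j<s. x j *\<^sub>R p j)))"
    by (simp add: inner_sum_left)
  also have "\<dots> = (\<Sum>j<s. (x j)^2)"
    by (rule sum.cong) (simp_all add: onb_coord power2_eq_square)
  finally show ?thesis .
qed

end




lemma quad_zero:
  fixes a b :: real assumes "\<And>e. 0 \<le> a * e + b * e^2" shows "a = 0"
proof (rule ccontr)
  assume a: "a \<noteq> 0"
  define t where "t = 1 / (\<bar>b\<bar> + 1)"
  have t: "t > 0" by (simp add: t_def add_pos_nonneg)
  have bt: "b * t < 1" unfolding t_def by (simp add: divide_simps) linarith
  have "0 \<le> a * (-a*t) + b * (-a*t)^2" by (rule assms)
  also have "\<dots> = a^2 * t * (b * t - 1)" by (simp add: power2_eq_square algebra_simps)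
  also have "\<dots> < 0" using a t bt by (intro mult_pos_neg) auto
  finally show False by simp
qed

lemma angle_char:
  fixes V W :: "(real^'n) set"
  assumes V: "subspace V" and W: "subspace W" and dV: "dim V = s" and dW: "dim W = s" and s: "1 \<le> s"
  shows "\<exists>w0\<in>W. norm w0 = 1 \<and> subspace_angle V W = arccos (norm (orth_proj V w0))
           \<and> (\<forall>w\<in>W. norm w = 1 \<longrightarrow> norm (orth_proj V w0) \<le> norm (orth_proj V w))"
proof -
  define p where "p = (SOME p. is_onb V s p)"
  define q where "q = (SOME q. is_onb W s q)"
  have p: "is_onb V s p" unfolding p_def by (rule someI_ex[OF onb_exists[OF V dV]])
  have q: "is_onb W s q" unfolding q_def by (rule someI_ex[OF onb_exists[OF W dW]])
  define P where "P = orth_proj V"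
  define Q where "Q x = (\<Sum>j<s. x j *\<^sub>R q j)" for x
  define G where "G i j = (\<Sum>k<s. (p k \<bullet> q i) * (p k \<bullet> q j))" for i j
  have ang: "subspace_angle V W = arccos (sqrt (Min {c. is_eigenvalue_sq s G c}))"
    unfolding subspace_angle_def Let_def dV p_def[symmetric] q_def[symmetric] min_singular_value_def G_def ..
  have Gx: "(\<Sum>j<s. G i j * x j) = q i \<bullet> P (Q x)" for i x
  proof -
    have "(\<Sum>j<s. G i j * x j) = (\<Sum>j<s. \<Sum>k<s. (p k \<bullet> q i) * ((p k \<bullet> q j) * x j))"
      by (simp add: G_def sum_distrib_right mult.assoc)
    also have "\<dots> = (\<Sum>k<s. \<Sum>j<s. (p k \<bullet> q i) * ((p k \<bullet> q j) * x j))" by (rule sum.swap)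
    also have "\<dots> = (\<Sum>k<s. (p k \<bullet> q i) * (p k \<bullet> Q x))"
      by (simp add: Q_def inner_sum_right sum_distrib_left mult.commute mult.left_commute)
    also have "\<dots> = q i \<bullet> P (Q x)"
      by (simp add: P_def onb_proj[OF p] inner_sum_right mult.commute inner_commute)
    finally show ?thesis .
  qed
  define eigW where "eigW c w \<longleftrightarrow> w \<in> W \<and> w \<noteq> 0 \<and> (\<forall>y\<in>W. P w \<bullet> y = c * (w \<bullet> y))" for c w
  have PL: "linear P" unfolding P_def by (rule orth_proj_linear[OF V])
  have Pin: "P x \<bullet> y = P x \<bullet> P y" for x y unfolding P_def by (rule orth_proj_inner[OF V])
  have E_iff: "is_eigenvalue_sq s G c \<longleftrightarrow> (\<exists>w. eigW c w)" for c
  proof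
    assume "is_eigenvalue_sq s G c"
    then obtain x i0 where i0: "i0 < s" "x i0 \<noteq> 0" and ev: "\<And>i. i < s \<Longrightarrow> (\<Sum>j<s. G i j * x j) = c * x i"
      unfolding is_eigenvalue_sq_def by blast
    define w where "w = Q x"
    have wW: "w \<in> W" unfolding w_def Q_def by (rule onb_comb_in[OF q])
    have co: "i < s \<Longrightarrow> q i \<bullet> w = x i" for i unfolding w_def Q_def by (rule onb_coord[OF q])
    have w0: "w \<noteq> 0" using co[OF i0(1)] i0(2) by auto
    have qi: "i < s \<Longrightarrow> q i \<bullet> P w = c * (q i \<bullet> w)" for i using ev[of i] Gx[of i x] co[of i] by (simp add: w_def)
    have "P w \<bullet> y = c * (w \<bullet> y)" if y: "y \<in> W" for y
    proof -
      have "P w \<bullet> y = y \<bullet> P w" by (simp add: inner_commute)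
      also have "\<dots> = (\<Sum>i<s. (q i \<bullet> y) * (q i \<bullet> P w))" by (rule onb_parseval[OF q y])
      also have "\<dots> = c * (\<Sum>i<s. (q i \<bullet> y) * (q i \<bullet> w))"
        by (simp add: qi sum_distrib_left mult.commute mult.left_commute)
      also have "\<dots> = c * (y \<bullet> w)" using onb_parseval[OF q y, of w] by simp
      finally show ?thesis by (simp add: inner_commute)
    qed
    then show "\<exists>w. eigW c w" using wW w0 unfolding eigW_def by blast
  next
    assume "\<exists>w. eigW c w"
    then obtain w where wW: "w \<in> W" and w0: "w \<noteq> 0" and ev: "\<And>y. y \<in> W \<Longrightarrow> P w \<bullet> y = c * (w \<bullet> y)"
      unfolding eigW_def by blast
    define x where "x i = q i \<bullet> w" for i
    have Qx: "Q x = w" unfolding Q_def x_def using onb_expand[OF q wW] by simp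
    have "\<exists>i<s. x i \<noteq> 0"
    proof (rule ccontr)
      assume "\<not> (\<exists>i<s. x i \<noteq> 0)"
      then have "Q x = 0" unfolding Q_def by simp
      then show False using Qx w0 by simp
    qed
    moreover have "(\<Sum>j<s. G i j * x j) = c * x i" if i: "i < s" for i
      using Gx[of i x] Qx ev[OF onb_in[OF q i]] by (simp add: x_def inner_commute)
    ultimately show "is_eigenvalue_sq s G c" unfolding is_eigenvalue_sq_def by blast
  qed
  have ray: "c * (norm w)^2 = (norm (P w))^2" if "eigW c w" for c w
  proof -
    have "P w \<bullet> w = c * (w \<bullet> w)" using that unfolding eigW_def by blast
    then show ?thesis using Pin[of w w] by (simp add: power2_norm_eq_inner)
  qed
  \<comment> \<open>the minimizer\<close>
  define S where "S = sphere (0::real^'n) 1 \<inter> W"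
  have cS: "compact S" unfolding S_def by (rule compact_Int_closed[OF compact_sphere closed_subspace[OF W]])
  obtain w1 where w1: "w1 \<in> W" "w1 \<noteq> 0"
  proof -
    have "\<not> W \<subseteq> {0}" using dW s dim_eq_0[of W] by auto
    then show ?thesis using that by blast
  qed
  have "w1 /\<^sub>R norm w1 \<in> S" unfolding S_def using w1 subspace_scale[OF W] by auto
  then have neS: "S \<noteq> {}" by blast
  have PB: "bounded_linear P" unfolding P_def by (rule orth_proj_bl[OF V])
  have ctS: "continuous_on S (\<lambda>w. norm (P w))"
    by (intro continuous_on_norm linear_continuous_on PB)
  obtain w0 where w0S: "w0 \<in> S" and w0min: "\<And>y. y \<in> S \<Longrightarrow> norm (P w0) \<le> norm (P y)"
    using continuous_attains_inf[OF cS neS ctS] by blast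
  have w0W: "w0 \<in> W" and nw0: "norm w0 = 1" using w0S unfolding S_def by auto
  define c0 where "c0 = (norm (P w0))^2"
  have scl: "norm (P w0) * norm z \<le> norm (P z)" if "z \<in> W" for z
  proof (cases "z = 0")
    case True then show ?thesis by (simp add: linear_0[OF PL])
  next
    case False
    have "z /\<^sub>R norm z \<in> S" unfolding S_def using that False subspace_scale[OF W] by auto
    then have "norm (P w0) \<le> norm (P (z /\<^sub>R norm z))" by (rule w0min)
    also have "\<dots> = norm (P z) / norm z" by (simp add: linear_scale[OF PL] divide_inverse mult.commute)
    finally show ?thesis using False by (simp add: divide_simps)
  qed
  have scl2: "c0 * (norm z)^2 \<le> (norm (P z))^2" if "z \<in> W" for z
  proof -
    have "(norm (P w0) * norm z)^2 \<le> (norm (P z))^2"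
      using scl[OF that] by (intro power_mono) auto
    then show ?thesis by (simp add: c0_def power_mult_distrib)
  qed
  have var: "P w0 \<bullet> y = c0 * (w0 \<bullet> y)" if y: "y \<in> W" for y
  proof -
    have "0 \<le> (2 * (P w0 \<bullet> P y - c0 * (w0 \<bullet> y))) * e + (P y \<bullet> P y - c0 * (y \<bullet> y)) * e^2" for e
    proof -
      have zW: "w0 + e *\<^sub>R y \<in> W" using w0W y W by (simp add: subspace_add subspace_scale)
      have "c0 * (norm (w0 + e *\<^sub>R y))^2 \<le> (norm (P (w0 + e *\<^sub>R y)))^2" by (rule scl2[OF zW])
      moreover have "(norm (w0 + e *\<^sub>R y))^2 = 1 + 2 * e * (w0 \<bullet> y) + e^2 * (y \<bullet> y)"
        using nw0 unfolding power2_norm_eq_inner by (simp add: norm_eq_1[symmetric] inner_add_left inner_add_right inner_commute power2_eq_square algebra_simps)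
      moreover have "(norm (P (w0 + e *\<^sub>R y)))^2 = c0 + 2 * e * (P w0 \<bullet> P y) + e^2 * (P y \<bullet> P y)"
        unfolding c0_def power2_norm_eq_inner by (simp add: linear_add[OF PL] linear_scale[OF PL] inner_add_left inner_add_right inner_commute power2_eq_square algebra_simps)
      ultimately show ?thesis by (simp add: algebra_simps power2_eq_square)
    qed
    then have "2 * (P w0 \<bullet> P y - c0 * (w0 \<bullet> y)) = 0" by (rule quad_zero)
    then show ?thesis using Pin[of w0 y] by simp
  qed
  have eig0: "eigW c0 w0" unfolding eigW_def using w0W nw0 var by auto
  have ge: "c0 \<le> c" if "eigW c w" for c w
  proof -
    have wW: "w \<in> W" and wnz: "w \<noteq> 0" using that unfolding eigW_def by auto
    have "c0 * (norm w)^2 \<le> c * (norm w)^2" using scl2[OF wW] ray[OF that] by simp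
    then show ?thesis using wnz by simp
  qed
  define E where "E = {c. is_eigenvalue_sq s G c}"
  have E: "E = {c. \<exists>w. eigW c w}" unfolding E_def using E_iff by blast
  define wf where "wf c = (SOME w. eigW c w)" for c
  have wf: "eigW c (wf c)" if "c \<in> E" for c
    using that unfolding E wf_def by (auto intro: someI_ex)
  have orth: "wf c \<bullet> wf c' = 0" if "c \<in> E" "c' \<in> E" "c \<noteq> c'" for c c'
  proof -
    have a: "P (wf c) \<bullet> wf c' = c * (wf c \<bullet> wf c')" using wf[OF that(1)] wf[OF that(2)] unfolding eigW_def by blast
    have b: "P (wf c') \<bullet> wf c = c' * (wf c' \<bullet> wf c)" using wf[OF that(1)] wf[OF that(2)] unfolding eigW_def by blast
    have "P (wf c) \<bullet> wf c' = P (wf c') \<bullet> wf c" using Pin[of "wf c" "wf c'"] Pin[of "wf c'" "wf c"] by (simp add: inner_commute)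
    then have "(c - c') * (wf c \<bullet> wf c') = 0" using a b by (simp add: inner_commute algebra_simps)
    then show ?thesis using that(3) by simp
  qed
  have inj: "inj_on wf E"
  proof (rule inj_onI)
    fix c c' assume cc: "c \<in> E" "c' \<in> E" "wf c = wf c'"
    show "c = c'"
    proof (rule ccontr)
      assume "c \<noteq> c'"
      then have "wf c \<bullet> wf c = 0" using orth[OF cc(1,2)] cc(3) by simp
      then show False using wf[OF cc(1)] unfolding eigW_def by simp
    qed
  qed
  have "pairwise orthogonal (wf ` E)"
    unfolding pairwise_def orthogonal_def using orth by force
  moreover have "0 \<notin> wf ` E" using wf unfolding eigW_def by force
  ultimately have "independent (wf ` E)" by (rule pairwise_orthogonal_independent)
  then have "finite (wf ` E)" using independent_bound by blast
  then have fE: "finite E" using inj finite_imageD by blast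
  have "Min E = c0"
  proof (rule Min_eqI[OF fE])
    show "c0 \<in> E" unfolding E using eig0 by blast
    fix c assume "c \<in> E" then show "c0 \<le> c" unfolding E using ge by blast
  qed
  then have "subspace_angle V W = arccos (norm (P w0))"
    using ang unfolding E_def by (simp add: c0_def)
  moreover have "\<forall>w\<in>W. norm w = 1 \<longrightarrow> norm (P w0) \<le> norm (P w)"
    using w0min unfolding S_def by auto
  ultimately show ?thesis using w0W nw0 unfolding P_def by blast
qed

lemma angle_sin:
  fixes V W :: "(real^'n) set"
  assumes V: "subspace V" and W: "subspace W" and dV: "dim V = s" and dW: "dim W = s" and s: "1 \<le> s"
  shows "0 \<le> sin (subspace_angle V W)"
    and "subspace_angle V W = arcsin (sin (subspace_angle V W))"
    and "\<exists>w0\<in>W. norm w0 = 1 \<and> sin (subspace_angle V W) = norm (w0 - orth_proj V w0)"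
    and "\<And>w. w \<in> W \<Longrightarrow> norm (w - orth_proj V w) \<le> sin (subspace_angle V W) * norm w"
proof -
  obtain w0 where w0W: "w0 \<in> W" and nw0: "norm w0 = 1"
    and ang: "subspace_angle V W = arccos (norm (orth_proj V w0))"
    and mn: "\<forall>w\<in>W. norm w = 1 \<longrightarrow> norm (orth_proj V w0) \<le> norm (orth_proj V w)"
    using angle_char[OF assms] by blast
  define y where "y = norm (orth_proj V w0)"
  have py: "1 = y^2 + (norm (w0 - orth_proj V w0))^2" using orth_proj_pyth[OF V, of w0] nw0 y_def by simp
  have "y^2 \<le> 1" using py zero_le_power2[of "norm (w0 - orth_proj V w0)"] by linarith
  then have y0: "0 \<le> y" "y \<le> 1" using y_def power2_le_imp_le[of y 1] by simp_all
  have sn: "sin (subspace_angle V W) = norm (w0 - orth_proj V w0)"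
  proof -
    have "1 - y^2 = (norm (w0 - orth_proj V w0))^2" using py by simp
    then show ?thesis using ang y0 by (simp add: y_def[symmetric] sin_arccos)
  qed
  show "0 \<le> sin (subspace_angle V W)" using sn by simp
  have "0 \<le> subspace_angle V W" "subspace_angle V W \<le> pi/2" using ang y0 arccos_lbound arccos_le_pi2 by (auto simp: y_def[symmetric])
  then show "subspace_angle V W = arcsin (sin (subspace_angle V W))" by (simp add: arcsin_sin)
  show "\<exists>w0\<in>W. norm w0 = 1 \<and> sin (subspace_angle V W) = norm (w0 - orth_proj V w0)"
    using w0W nw0 sn by blast
  fix w assume wW: "w \<in> W"
  have PL: "linear (orth_proj V)" by (rule orth_proj_linear[OF V])
  show "norm (w - orth_proj V w) \<le> sin (subspace_angle V W) * norm w"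
  proof (cases "w = 0")
    case True then show ?thesis by (simp add: linear_0[OF PL])
  next
    case False
    define u where "u = w /\<^sub>R norm w"
    have uW: "u \<in> W" "norm u = 1" unfolding u_def using wW False subspace_scale[OF W] by auto
    have "y \<le> norm (orth_proj V u)" using mn uW y_def by blast
    then have "y^2 \<le> (norm (orth_proj V u))^2" using y0 by (intro power_mono) auto
    moreover have "1 = (norm (orth_proj V u))^2 + (norm (u - orth_proj V u))^2" using orth_proj_pyth[OF V, of u] uW by simp
    ultimately have "(norm (u - orth_proj V u))^2 \<le> (sin (subspace_angle V W))^2" unfolding sn using py by linarith
    then have "norm (u - orth_proj V u) \<le> sin (subspace_angle V W)"
      using sn by (simp add: power2_le_iff_abs_le)
    moreover have "norm (u - orth_proj V u) = norm (w - orth_proj V w) / norm w"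
      unfolding u_def by (simp add: linear_scale[OF PL] scaleR_diff_right[symmetric] del: scaleR_diff_right) (simp add: divide_inverse mult.commute)
    ultimately show ?thesis using False by (simp add: divide_simps)
  qed
qed




lemma arith_upper:
  fixes D h nv c a g e :: real
  assumes "0 \<le> h" "0 \<le> nv" "0 \<le> c" "D \<le> h * (c + a) * nv" "nv * (1 - h * g) \<le> 1"
    "a \<le> e/2" "0 < e" "h * g * (c + e) \<le> e/2"
  shows "D \<le> (c + e) * h"
proof -
  have c1: "c + e/2 \<le> (c + e) * (1 - h * g)" using assms(8) by (simp add: algebra_simps)
  have "D \<le> h * (c + e/2) * nv" using assms(4) assms(6) assms(1,2) by (simp add: mult_left_mono mult_right_mono order_trans)
  also have "\<dots> \<le> h * ((c + e) * (1 - h * g)) * nv" using c1 assms(1,2) by (intro mult_right_mono mult_left_mono) auto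
  also have "\<dots> = h * (c + e) * (nv * (1 - h * g))" by (simp add: algebra_simps)
  also have "\<dots> \<le> h * (c + e) * 1" using assms(1,3,5,7) by (intro mult_left_mono) auto
  finally show ?thesis by (simp add: mult.commute)
qed

lemma arith_lower:
  fixes D h c g e :: real
  assumes "h * (c - e/2) \<le> D * (1 + h * g)" "0 \<le> h" "0 \<le> g" "h * g * c \<le> e/2" "0 < e" "0 \<le> D"
  shows "(c - e) * h \<le> D"
proof (cases "c - e \<le> 0")
  case True
  have "(c - e) * h \<le> 0" using True assms(2) by (simp add: mult_nonpos_nonneg)
  then show ?thesis using assms(6) by linarith
next
  case False
  have hg: "0 \<le> h * g" using assms by simp
  have "(c - e) * h * (1 + h * g) = (c - e) * h + h * ((c - e) * (h * g))" by (simp add: algebra_simps)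
  also have "(c - e) * (h * g) \<le> e/2"
  proof -
    have "(c - e) * (h * g) \<le> c * (h * g)" using hg assms(5) by (intro mult_right_mono) auto
    then show ?thesis using assms(4) by (simp add: algebra_simps)
  qed
  then have "(c - e) * h + h * ((c - e) * (h * g)) \<le> (c - e) * h + h * (e/2)" using assms(2) by (intro add_left_mono mult_left_mono)
  finally have "(c - e) * h * (1 + h * g) \<le> D * (1 + h * g)" using assms(1) by (simp add: algebra_simps)
  then show ?thesis using hg by (simp add: mult_le_cancel_right add_pos_nonneg)
qed




lemma scaleR_mv: "(h *\<^sub>R M) *v x = h *\<^sub>R (M *v (x::real^'n))" for M :: "real^'n^'m"
  by (simp add: matrix_vector_mult_def vec_eq_iff sum_distrib_left mult.assoc)

theorem corollary3p7:
  fixes A :: "real \<Rightarrow> real^'n^'n"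
    and \<Phi> :: "real \<Rightarrow> real \<Rightarrow> real^'n^'n"
    and T :: ereal
    and s :: nat
    and V0 :: "(real^'n) set"
    and \<tau> :: real
  assumes A_cont: "continuous_on (time_dom T) A"
    and \<Phi>_ode: "\<forall>\<sigma>\<in>time_dom T. \<forall>t\<in>time_dom T.
                 ((\<lambda>t. \<Phi> t \<sigma>) has_vector_derivative (A t ** \<Phi> t \<sigma>)) (at t within time_dom T)"
    and \<Phi>_init: "\<forall>\<sigma>\<in>time_dom T. \<Phi> \<sigma> \<sigma> = mat 1"
    and s_pos: "1 \<le> s"
    and V0: "V0 \<in> grassmannian s"
    and \<tau>: "\<tau> \<in> time_dom T"
  shows "((\<lambda>t. subspace_angle ((\<lambda>v. \<Phi> \<tau> 0 *v v) ` V0) ((\<lambda>v. \<Phi> t 0 *v v) ` V0))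
           has_real_derivative
           spectral_norm ((mat 1 - proj_matrix ((\<lambda>v. \<Phi> \<tau> 0 *v v) ` V0)) ** A \<tau>
                          ** proj_matrix ((\<lambda>v. \<Phi> \<tau> 0 *v v) ` V0)))
         (at_right \<tau>)"
proof -
  define L where "L = \<Phi> \<tau> 0"
  define V where "V = (\<lambda>v. L *v v) ` V0"
  define W where "W t = (\<lambda>v. \<Phi> t 0 *v v) ` V0" for t
  define P where "P = orth_proj V"
  define B where "B = A \<tau>"
  have V0s: "subspace V0" "dim V0 = s" using V0 by (auto simp: grassmannian_def)
  have \<tau>0: "0 \<le> \<tau>" using \<tau> by (simp add: time_dom_def)
  have z: "0 \<in> time_dom T" using time_dom_interval[OF \<tau>, of 0] \<tau>0 by simp
  have injM: "inj ((*v) (\<Phi> t 0))" if "t \<in> time_dom T" for t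
  proof (rule injI)
    fix x y assume "\<Phi> t 0 *v x = \<Phi> t 0 *v y"
    then have "\<Phi> t 0 *v (x - y) = 0" by (simp add: matrix_vector_mult_diff_distrib)
    then have "x - y = 0" by (rule ode_inj[OF A_cont \<Phi>_ode \<Phi>_init that])
    then show "x = y" by simp
  qed
  have Wsub: "subspace (W t) \<and> dim (W t) = s" if "t \<in> time_dom T" for t
  proof -
    have lin: "linear ((*v) (\<Phi> t 0))" by simp
    have "subspace (W t)" unfolding W_def using linear_subspace_image[OF lin V0s(1)] by simp
    moreover have "dim (W t) = s" unfolding W_def
      using dim_image_eq[OF lin, of V0] injM[OF that] V0s(2) by (simp add: inj_on_subset)
    ultimately show ?thesis by simp
  qed
  have VW: "V = W \<tau>" by (simp add: V_def W_def L_def)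
  have Vs: "subspace V" "dim V = s" using Wsub[OF \<tau>] VW by auto
  have PL: "linear P" unfolding P_def by (rule orth_proj_linear[OF Vs(1)])
  have Pv: "v \<in> V \<Longrightarrow> P v = v" for v unfolding P_def using orth_proj_id[OF Vs(1)] .
  have PV: "P x \<in> V" for x unfolding P_def by (rule orth_proj_in[OF Vs(1)])
  have Pcontr: "norm (x - P x) \<le> norm x" "norm (P x) \<le> norm x" for x
  proof -
    have e: "(norm x)^2 = (norm (P x))^2 + (norm (x - P x))^2" unfolding P_def by (rule orth_proj_pyth[OF Vs(1)])
    have "(norm (x - P x))^2 \<le> (norm x)^2" using e zero_le_power2[of "norm (P x)"] by linarith
    then show "norm (x - P x) \<le> norm x" by (rule power2_le_imp_le) simp
    have "(norm (P x))^2 \<le> (norm x)^2" using e zero_le_power2[of "norm (x - P x)"] by linarith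
    then show "norm (P x) \<le> norm x" by (rule power2_le_imp_le) simp
  qed
  have Pdiff: "norm ((x - P x) - (y - P y)) \<le> norm (x - y)" for x y
  proof -
    have eq: "(x - P x) - (y - P y) = (x - y) - P (x - y)" using linear_diff[OF PL, of x y] by (simp add: algebra_simps)
    show ?thesis unfolding eq by (rule Pcontr(1))
  qed
  define Nm where "Nm = (mat 1 - proj_matrix V) ** B ** proj_matrix V"
  have PM: "proj_matrix V *v x = P x" for x
  proof -
    have "(\<lambda>x. matrix (orth_proj V) *v x) = orth_proj V" by (rule matrix_vector_mul(2)[OF orth_proj_linear[OF Vs(1)]])
    then show ?thesis unfolding proj_matrix_def P_def by (rule fun_cong)
  qed
  have Nform: "Nm *v x = B *v P x - P (B *v P x)" for x
    unfolding Nm_def by (simp add: matrix_vector_mul_assoc[symmetric] matrix_vector_mult_diff_rdistrib PM)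
  define c where "c = onorm ((*v) Nm)"
  have blN: "bounded_linear ((*v) Nm)" by simp
  have c0: "0 \<le> c" using onorm_pos_le[OF blN] c_def by simp
  have Up: "norm (B *v v - P (B *v v)) \<le> c * norm v" if "v \<in> V" for v
    using onorm[OF blN, of v] Nform[of v] Pv[OF that] c_def by simp
  have Low: "\<exists>v\<in>V. v \<noteq> 0 \<and> (c - e) * norm v \<le> norm (B *v v - P (B *v v))" if e: "0 < e" "0 < c - e" for e
  proof -
    have bdd: "bdd_above (range (\<lambda>x. norm (Nm *v x) / norm x))"
      by (rule bdd_aboveI2[where M=c]) (use le_onorm[OF blN] c_def in simp)
    have "c - e < (SUP x. norm (Nm *v x) / norm x)" using e c_def by (simp add: onorm_def)
    then obtain x where x: "c - e < norm (Nm *v x) / norm x"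
      using less_cSUP_iff[OF _ bdd] by auto
    have xnz: "x \<noteq> 0" using x e by auto
    have lt: "(c - e) * norm x < norm (Nm *v x)" using x xnz by (simp add: less_divide_eq)
    define v where "v = P x"
    have "(c - e) * norm v \<le> (c - e) * norm x" unfolding v_def using Pcontr(2) e by (intro mult_left_mono) auto
    also have "\<dots> < norm (B *v v - P (B *v v))" using lt Nform v_def by simp
    finally have vb: "(c - e) * norm v < norm (B *v v - P (B *v v))" .
    have "v \<noteq> 0"
    proof
      assume "v = 0"
      then have "norm (B *v v - P (B *v v)) = 0" by (simp add: linear_0[OF PL])
      moreover have "0 < (c - e) * norm x" using e xnz by simp
      ultimately show False using lt Nform v_def by simp
    qed
    then show ?thesis using vb PV v_def by (intro bexI[of _ v]) auto
  qed
  have dPhi: "((\<lambda>t. \<Phi> t 0) has_derivative (\<lambda>h. h *\<^sub>R (B ** L))) (at \<tau> within time_dom T)"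
    using \<Phi>_ode z \<tau> unfolding has_vector_derivative_def B_def L_def by blast
  then have dE: "\<forall>e>0. \<exists>d>0. \<forall>t\<in>time_dom T. norm (t - \<tau>) < d \<longrightarrow>
      norm (\<Phi> t 0 - L - (t - \<tau>) *\<^sub>R (B ** L)) \<le> e * norm (t - \<tau>)"
    unfolding has_derivative_within_alt L_def by blast
  obtain Li where Li: "Li ** L = mat 1"
  proof -
    have "\<forall>x. L *v x = 0 \<longrightarrow> x = 0" using ode_inj[OF A_cont \<Phi>_ode \<Phi>_init \<tau>] L_def by blast
    then show ?thesis using that matrix_left_invertible_ker[of L] by blast
  qed
  define Kc where "Kc = real CARD('n) * real CARD('n)"
  have mv: "norm (M *v x) \<le> Kc * norm M * norm x" for M :: "real^'n^'n" and x
    using matvec_norm_le[of M x] by (simp add: Kc_def)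
  have Kc0: "0 \<le> Kc" by (simp add: Kc_def)
  define \<kappa> where "\<kappa> = Kc * (Kc * norm Li)"
  define \<beta> where "\<beta> = Kc * norm B"
  have \<kappa>0: "0 \<le> \<kappa>" and \<beta>0: "0 \<le> \<beta>" using Kc0 by (auto simp: \<kappa>_def \<beta>_def)
  have v0b: "norm v0 \<le> Kc * norm Li * norm (L *v v0)" for v0
  proof -
    have "v0 = Li *v (L *v v0)" by (simp add: matrix_vector_mul_assoc Li)
    then have "norm v0 = norm (Li *v (L *v v0))" by simp
    also have "\<dots> \<le> Kc * norm Li * norm (L *v v0)" by (rule mv)
    finally show ?thesis .
  qed
  define Rm where "Rm t = \<Phi> t 0 - L - (t - \<tau>) *\<^sub>R (B ** L)" for t
  have decomp: "\<Phi> t 0 *v v0 = L *v v0 + (t - \<tau>) *\<^sub>R (B *v (L *v v0)) + Rm t *v v0" for t v0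
    by (simp add: Rm_def matrix_vector_mult_diff_rdistrib scaleR_mv matrix_vector_mul_assoc)
  have Rb: "norm (Rm t *v v0) \<le> \<kappa> * norm (Rm t) * norm (L *v v0)" for t v0
  proof -
    have "norm (Rm t *v v0) \<le> Kc * norm (Rm t) * norm v0" by (rule mv)
    also have "\<dots> \<le> Kc * norm (Rm t) * (Kc * norm Li * norm (L *v v0))"
      using v0b Kc0 by (intro mult_left_mono) auto
    finally show ?thesis by (simp add: \<kappa>_def algebra_simps)
  qed
  define D where "D t = sin (subspace_angle V (W t))" for t
  have Dprops: "0 \<le> D t \<and> subspace_angle V (W t) = arcsin (D t)
      \<and> (\<exists>w0\<in>W t. norm w0 = 1 \<and> D t = norm (w0 - P w0))
      \<and> (\<forall>w\<in>W t. norm (w - P w) \<le> D t * norm w)" if t: "t \<in> time_dom T" for t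
    using angle_sin[OF Vs(1) conjunct1[OF Wsub[OF t]] Vs(2) conjunct2[OF Wsub[OF t]] s_pos]
    unfolding D_def P_def by blast
  have D\<tau>: "D \<tau> = 0"
  proof -
    obtain w0 where "w0 \<in> W \<tau>" "D \<tau> = norm (w0 - P w0)" using Dprops[OF \<tau>] by blast
    then show ?thesis using Pv VW by simp
  qed
  have wdecomp: "\<Phi> t 0 *v v0 - P (\<Phi> t 0 *v v0) = (t - \<tau>) *\<^sub>R (B *v (L *v v0) - P (B *v (L *v v0))) + (Rm t *v v0 - P (Rm t *v v0))"
    if "v0 \<in> V0" for t v0
  proof -
    have vV: "L *v v0 \<in> V" using that V_def by blast
    have PP: "P (L *v v0 + (t - \<tau>) *\<^sub>R (B *v (L *v v0)) + Rm t *v v0) = L *v v0 + (t - \<tau>) *\<^sub>R P (B *v (L *v v0)) + P (Rm t *v v0)"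
      by (simp only: linear_add[OF PL] linear_scale[OF PL] Pv[OF vV])
    show ?thesis unfolding decomp[of t v0] PP by (simp add: algebra_simps)
  qed
  have rb: "norm (Rm t *v v0) \<le> \<kappa> * \<eta> * (t - \<tau>) * norm (L *v v0)"
    if "norm (Rm t) \<le> \<eta> * (t - \<tau>)" for t \<eta> v0
  proof -
    have "norm (Rm t *v v0) \<le> \<kappa> * norm (Rm t) * norm (L *v v0)" by (rule Rb)
    also have "\<dots> \<le> \<kappa> * (\<eta> * (t - \<tau>)) * norm (L *v v0)"
      using that \<kappa>0 by (intro mult_right_mono mult_left_mono) auto
    finally show ?thesis by (simp add: algebra_simps)
  qed
  have Bb: "norm (B *v v) \<le> \<beta> * norm v" for v using mv[of B v] by (simp add: \<beta>_def)
  have upper: "\<exists>nv\<ge>0. D t \<le> (t - \<tau>) * (c + \<kappa> * \<eta>) * nv \<and> nv * (1 - (t - \<tau>) * (\<beta> + \<kappa> * \<eta>)) \<le> 1"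
    if t: "t \<in> time_dom T" "\<tau> < t" and \<eta>: "0 \<le> \<eta>" and R: "norm (Rm t) \<le> \<eta> * (t - \<tau>)" for t \<eta>
  proof -
    obtain w0 where w0: "w0 \<in> W t" "norm w0 = 1" "D t = norm (w0 - P w0)" using Dprops[OF t(1)] by blast
    obtain v0 where v0: "v0 \<in> V0" "w0 = \<Phi> t 0 *v v0" using w0(1) W_def by blast
    define v where "v = L *v v0"
    define h where "h = t - \<tau>"
    have h0: "0 < h" using t h_def by simp
    have vV: "v \<in> V" using v0 V_def v_def by blast
    define r where "r = Rm t *v v0"
    have rn: "norm r \<le> \<kappa> * \<eta> * h * norm v" using rb[OF R] r_def v_def h_def by simp
    have "D t = norm (h *\<^sub>R (B *v v - P (B *v v)) + (r - P r))"
      using w0(3) wdecomp[OF v0(1), of t] v0(2) by (simp add: h_def r_def v_def)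
    also have "\<dots> \<le> norm (h *\<^sub>R (B *v v - P (B *v v))) + norm (r - P r)" by (rule norm_triangle_ineq)
    also have "\<dots> \<le> h * (c * norm v) + \<kappa> * \<eta> * h * norm v"
      using Up[OF vV] Pcontr(1)[of r] rn h0 by (intro add_mono) (auto intro: mult_left_mono)
    finally have Du: "D t \<le> h * (c + \<kappa> * \<eta>) * norm v" by (simp add: algebra_simps)
    have "1 = norm (v + h *\<^sub>R (B *v v) + r)" using w0(2) v0(2) decomp[of t v0] by (simp add: h_def r_def v_def)
    also have "\<dots> \<ge> norm v - norm (h *\<^sub>R (B *v v)) - norm r"
      by (smt (verit) norm_triangle_ineq4 norm_diff_ineq add_diff_cancel_right')
    finally have "norm v - norm (h *\<^sub>R (B *v v)) - norm r \<le> 1" .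
    moreover have "norm (h *\<^sub>R (B *v v)) \<le> h * (\<beta> * norm v)" using Bb h0 by (simp add: mult_left_mono)
    ultimately have "norm v * (1 - h * (\<beta> + \<kappa> * \<eta>)) \<le> 1" using rn by (simp add: algebra_simps)
    then show ?thesis using Du h_def by (intro exI[of _ "norm v"]) simp
  qed
  have lower: "h * (c - e - \<kappa> * \<eta>) \<le> D t * (1 + h * (\<beta> + \<kappa> * \<eta>))"
    if t: "t \<in> time_dom T" "\<tau> < t" and h: "h = t - \<tau>" and \<eta>: "0 \<le> \<eta>" and R: "norm (Rm t) \<le> \<eta> * (t - \<tau>)"
      and v: "v \<in> V" "v \<noteq> 0" "(c - e) * norm v \<le> norm (B *v v - P (B *v v))" for t \<eta> v h e
  proof -
    obtain v0 where v0: "v0 \<in> V0" "v = L *v v0" using v(1) V_def by blast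
    define w where "w = \<Phi> t 0 *v v0"
    have wW: "w \<in> W t" using v0 W_def w_def by blast
    have h0: "0 < h" using t h by simp
    define r where "r = Rm t *v v0"
    have rn: "norm r \<le> \<kappa> * \<eta> * h * norm v" using rb[OF R] r_def v0 h by simp
    have D0: "0 \<le> D t" using Dprops[OF t(1)] by blast
    have "h * ((c - e) * norm v) - \<kappa> * \<eta> * h * norm v \<le> norm (h *\<^sub>R (B *v v - P (B *v v))) - norm (r - P r)"
      using v(3) Pcontr(1)[of r] rn h0 by (intro diff_mono) (auto intro: mult_left_mono)
    also have "\<dots> \<le> norm (h *\<^sub>R (B *v v - P (B *v v)) + (r - P r))" by (rule norm_diff_ineq)
    also have "\<dots> = norm (w - P w)" using wdecomp[OF v0(1), of t] by (simp add: w_def h r_def v0(2))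
    also have "\<dots> \<le> D t * norm w" using Dprops[OF t(1)] wW by blast
    also have "\<dots> \<le> D t * (norm v * (1 + h * (\<beta> + \<kappa> * \<eta>)))"
    proof (rule mult_left_mono[OF _ D0])
      have "norm w = norm (v + h *\<^sub>R (B *v v) + r)" using decomp[of t v0] by (simp add: w_def h r_def v0(2))
      also have "\<dots> \<le> norm v + norm (h *\<^sub>R (B *v v)) + norm r" by (simp add: norm_triangle_le norm_triangle_ineq)
      also have "\<dots> \<le> norm v + h * (\<beta> * norm v) + \<kappa> * \<eta> * h * norm v"
        using Bb h0 rn by (intro add_mono) (auto intro: mult_left_mono)
      finally show "norm w \<le> norm v * (1 + h * (\<beta> + \<kappa> * \<eta>))" by (simp add: algebra_simps)
    qed
    finally have "norm v * (h * (c - e - \<kappa> * \<eta>)) \<le> norm v * (D t * (1 + h * (\<beta> + \<kappa> * \<eta>)))"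
      by (simp add: algebra_simps)
    then show ?thesis using v(2) by simp
  qed
  have \<tau>T: "ereal \<tau> < T" using \<tau> by (simp add: time_dom_def)
  have evT: "eventually (\<lambda>t. ereal t < T) (at_right \<tau>)"
  proof -
    have "((\<lambda>t. ereal t) \<longlongrightarrow> ereal \<tau>) (at_right \<tau>)" by (intro tendsto_ereal tendsto_ident_at)
    then show ?thesis using order_tendstoD(2)[OF _ \<tau>T] by blast
  qed
  have key: "eventually (\<lambda>t. dist ((D t - D \<tau>) / (t - \<tau>)) c < \<epsilon>) (at_right \<tau>)" if \<epsilon>: "0 < \<epsilon>" for \<epsilon>
  proof -
    define e where "e = \<epsilon> / 2"
    have e0: "0 < e" using \<epsilon> e_def by simp
    define \<eta> where "\<eta> = e / (4 * (\<kappa> + 1))"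
    have \<eta>0: "0 \<le> \<eta>" using e0 \<kappa>0 \<eta>_def by simp
    have k\<eta>: "\<kappa> * \<eta> \<le> e / 4"
    proof -
      have "\<kappa> * \<eta> = (e/4) * (\<kappa> / (\<kappa> + 1))" using \<kappa>0 by (simp add: \<eta>_def field_simps)
      also have "\<dots> \<le> (e/4) * 1" using \<kappa>0 e0 by (intro mult_left_mono) auto
      finally show ?thesis by simp
    qed
    have "\<eta> > 0" using e0 \<kappa>0 \<eta>_def by simp
    then obtain d where d: "d > 0" and dd: "\<And>t. t \<in> time_dom T \<Longrightarrow> norm (t - \<tau>) < d \<Longrightarrow>
        norm (\<Phi> t 0 - L - (t - \<tau>) *\<^sub>R (B ** L)) \<le> \<eta> * norm (t - \<tau>)" using dE by blast
    define \<gamma> where "\<gamma> = \<beta> + \<kappa> * \<eta>"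
    have \<gamma>0: "0 \<le> \<gamma>" using \<beta>0 \<kappa>0 \<eta>0 \<gamma>_def by simp
    define \<delta> where "\<delta> = min d (e / (4 * (\<gamma> * (c + e) + 1)))"
    have gce: "0 \<le> \<gamma> * (c + e)" using \<gamma>0 c0 e0 by simp
    then have "0 < e / (4 * (\<gamma> * (c + e) + 1))" using e0 by (intro divide_pos_pos) auto
    then have \<delta>0: "0 < \<delta>" using d by (simp add: \<delta>_def)
    have ev\<delta>: "eventually (\<lambda>t. t < \<tau> + \<delta>) (at_right \<tau>)"
      unfolding eventually_at_right_field using \<delta>0 by (intro exI[of _ "\<tau> + \<delta>"]) auto
    have ev: "eventually (\<lambda>t. \<tau> < t \<and> t < \<tau> + \<delta> \<and> ereal t < T) (at_right \<tau>)"
      using eventually_conj[OF eventually_at_right_less eventually_conj[OF ev\<delta> evT]] by simp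
    show ?thesis
    proof (rule eventually_mono[OF ev])
      fix t assume tt: "\<tau> < t \<and> t < \<tau> + \<delta> \<and> ereal t < T"
      define h where "h = t - \<tau>"
      have h0: "0 < h" and h\<delta>: "h < \<delta>" using tt h_def by auto
      have tdom: "t \<in> time_dom T" using tt \<tau>0 by (simp add: time_dom_def)
      have R: "norm (Rm t) \<le> \<eta> * (t - \<tau>)"
        using dd[OF tdom] h0 h\<delta> d unfolding Rm_def h_def by (simp add: \<delta>_def)
      have hg: "h * \<gamma> * (c + e) \<le> e / 2"
      proof -
        have "h < e / (4 * (\<gamma> * (c + e) + 1))" using h\<delta> by (simp add: \<delta>_def)
        moreover have "0 < 4 * (\<gamma> * (c + e) + 1)" using gce by simp
        ultimately have "h * (4 * (\<gamma> * (c + e) + 1)) < e" by (simp add: pos_less_divide_eq)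
        then have "4 * (h * (\<gamma> * (c + e))) + 4 * h < e" by (simp add: algebra_simps)
        then have "h * (\<gamma> * (c + e)) \<le> e / 2" using h0 e0 by linarith
        then show ?thesis by (simp add: mult.assoc)
      qed
      have hgc: "h * \<gamma> * c \<le> e / 2"
      proof -
        have "h * \<gamma> * c \<le> h * \<gamma> * (c + e)" using h0 \<gamma>0 e0 by (intro mult_left_mono) auto
        then show ?thesis using hg by simp
      qed
      have D0: "0 \<le> D t" using Dprops[OF tdom] by blast
      obtain nv where nv: "0 \<le> nv" "D t \<le> (t - \<tau>) * (c + \<kappa> * \<eta>) * nv" "nv * (1 - (t - \<tau>) * (\<beta> + \<kappa> * \<eta>)) \<le> 1"
        using upper[OF tdom _ \<eta>0 R] tt by blast
      have U: "D t \<le> (c + e) * h"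
        by (rule arith_upper[of h nv c _ "\<kappa> * \<eta>" \<gamma>]) (use h0 nv c0 k\<eta> e0 hg in \<open>auto simp: h_def \<gamma>_def\<close>)
      have Lo: "(c - e) * h \<le> D t"
      proof (cases "0 < c - e/4")
        case True
        obtain v where v: "v \<in> V" "v \<noteq> 0" "(c - e/4) * norm v \<le> norm (B *v v - P (B *v v))"
          using Low[of "e/4"] True e0 by auto
        have "h * (c - e/4 - \<kappa> * \<eta>) \<le> D t * (1 + h * \<gamma>)"
          using lower[OF tdom _ h_def \<eta>0 R v] tt by (simp add: \<gamma>_def)
        moreover have "h * (c - e/2) \<le> h * (c - e/4 - \<kappa> * \<eta>)" using k\<eta> h0 by (intro mult_left_mono) auto
        ultimately have "h * (c - e/2) \<le> D t * (1 + h * \<gamma>)" by linarith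
        then show ?thesis by (rule arith_lower) (use h0 \<gamma>0 hgc e0 D0 in auto)
      next
        case False
        then have "(c - e) * h \<le> 0" using h0 e0 by (intro mult_nonpos_nonneg) auto
        then show ?thesis using D0 by linarith
      qed
      have "\<bar>D t / h - c\<bar> \<le> e"
        using U Lo h0 by (simp add: abs_le_iff divide_simps algebra_simps)
      then show "dist ((D t - D \<tau>) / (t - \<tau>)) c < \<epsilon>"
        using e0 by (simp add: D\<tau> dist_real_def h_def e_def)
    qed
  qed
  have dD: "(D has_real_derivative c) (at_right \<tau>)"
    unfolding has_field_derivative_iff by (rule tendstoI) (rule key)
  have "((\<lambda>t. arcsin (D t)) has_real_derivative (inverse (sqrt (1 - (D \<tau>)\<^sup>2)) * c)) (at_right \<tau>)"
    by (rule DERIV_chain2[OF DERIV_arcsin dD]) (simp_all add: D\<tau>)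
  then have dA: "((\<lambda>t. arcsin (D t)) has_real_derivative c) (at_right \<tau>)" by (simp add: D\<tau>)
  have evE: "eventually (\<lambda>t. (arcsin (D t) - arcsin (D \<tau>)) / (t - \<tau>) = (subspace_angle V (W t) - subspace_angle V (W \<tau>)) / (t - \<tau>)) (at_right \<tau>)"
  proof (rule eventually_mono[OF eventually_conj[OF eventually_at_right_less evT]])
    fix t assume "\<tau> < t \<and> ereal t < T"
    then have "t \<in> time_dom T" using \<tau>0 by (simp add: time_dom_def)
    then show "(arcsin (D t) - arcsin (D \<tau>)) / (t - \<tau>) = (subspace_angle V (W t) - subspace_angle V (W \<tau>)) / (t - \<tau>)"
      using Dprops[of t] Dprops[OF \<tau>] by metis
  qed
  have final: "((\<lambda>t. subspace_angle V (W t)) has_real_derivative c) (at_right \<tau>)"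
    using dA unfolding has_field_derivative_iff using tendsto_cong[OF evE] by simp
  have gV: "(\<lambda>v. \<Phi> \<tau> 0 *v v) ` V0 = V" by (simp add: V_def L_def)
  have gS: "spectral_norm ((mat 1 - proj_matrix V) ** A \<tau> ** proj_matrix V) = c"
    by (simp add: spectral_norm_def c_def Nm_def B_def)
  have gA: "(\<lambda>t. subspace_angle V ((\<lambda>v. \<Phi> t 0 *v v) ` V0)) = (\<lambda>t. subspace_angle V (W t))"
    by (simp add: W_def)
  show ?thesis unfolding gV gS gA by (rule final)
qed

end
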